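(* Let $(X,d,\theta)$ be a $\theta$-metric space with $\theta$ a $B$-action. Then for every $a\in X$ and every $k>0$ there exists $r>0$ such that for all $b\in X$ with $d(a,b)\ge k$ and all $c\in X$, one has $d(a,c)+d(c,b)\ge r$.
   Context: A $B$-action is a map $\theta:[0,\infty)\times[0,\infty)\to[0,\infty)$ that is continuous in each variable separately and satisfies: (i) $\theta(0,0)=0$ and $\theta(s,t)=\theta(t,s)$ for all $s,t\ge0$; (ii) $\theta(x,y)<\theta(s,t)$ whenever either $x\le s,\ y<t$ or $x<s,\ y\le t$; (iii) for each $m\in\mathrm{Im}(\theta)=\{\theta(s,t):s,t\ge0\}$ and each $t\in[0,m]$ there is $s\in[0,m]$ with $\theta(s,t)=m$; (iv) $\theta(s,0)\le s$ for all $s>0$. A $\theta$-metric on a non-empty set $X$ with respect to a $B$-action $\theta$ is a map $d:X\times X\to[0,\infty)$ such that for all $x,y,z\in X$: $d(x,y)=0$ iff $x=y$; $d(x,y)=d(y,x)$; $d(x,z)\le\theta(d(x,y),d(y,z))$. *)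

theory Defs
  imports "HOL-Analysis.Analysis"
begin

text \<open>A B-action: a map theta on [0,inf) x [0,inf) into [0,inf), represented as a
  real function whose values off the nonnegative quadrant are irrelevant.\<close>
definition B_action :: "(real \<Rightarrow> real \<Rightarrow> real) \<Rightarrow> bool" where
  "B_action \<theta> \<longleftrightarrow>
     (\<forall>s\<ge>0. \<forall>t\<ge>0. \<theta> s t \<ge> 0) \<and>
     (\<forall>t\<ge>0. continuous_on {0..} (\<lambda>s. \<theta> s t)) \<and>
     (\<forall>s\<ge>0. continuous_on {0..} (\<lambda>t. \<theta> s t)) \<and>
     \<theta> 0 0 = 0 \<and>
     (\<forall>s\<ge>0. \<forall>t\<ge>0. \<theta> s t = \<theta> t s) \<and>
     (\<forall>x y s t. 0 \<le> x \<and> 0 \<le> y \<and> 0 \<le> s \<and> 0 \<le> t \<and>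
        ((x \<le> s \<and> y < t) \<or> (x < s \<and> y \<le> t)) \<longrightarrow> \<theta> x y < \<theta> s t) \<and>
     (\<forall>m \<in> {\<theta> s t | s t. s \<ge> 0 \<and> t \<ge> 0}. \<forall>t\<in>{0..m}. \<exists>s\<in>{0..m}. \<theta> s t = m) \<and>
     (\<forall>s>0. \<theta> s 0 \<le> s)"

definition theta_metric :: "(real \<Rightarrow> real \<Rightarrow> real) \<Rightarrow> 'a set \<Rightarrow> ('a \<Rightarrow> 'a \<Rightarrow> real) \<Rightarrow> bool" where
  "theta_metric \<theta> X d \<longleftrightarrow> X \<noteq> {} \<and>
     (\<forall>x\<in>X. \<forall>y\<in>X. d x y \<ge> 0) \<and>
     (\<forall>x\<in>X. \<forall>y\<in>X. d x y = 0 \<longleftrightarrow> x = y) \<and>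
     (\<forall>x\<in>X. \<forall>y\<in>X. d x y = d y x) \<and>
     (\<forall>x\<in>X. \<forall>y\<in>X. \<forall>z\<in>X. d x z \<le> \<theta> (d x y) (d y z))"

end

theory Submission
  imports Defs
begin

theorem mainTheorem9:
  fixes \<theta> :: "real \<Rightarrow> real \<Rightarrow> real" and X :: "'a set" and d :: "'a \<Rightarrow> 'a \<Rightarrow> real"
  assumes "B_action \<theta>" and "theta_metric \<theta> X d"
  shows "\<forall>a\<in>X. \<forall>k>0. \<exists>r>0. \<forall>b\<in>X. d a b \<ge> k \<longrightarrow> (\<forall>c\<in>X. d a c + d c b \<ge> r)"
proof (intro ballI allI impI)
  fix a k assume aX: "a \<in> X" and k: "(k::real) > 0"
  have mono: "\<And>x y s t. 0 \<le> x \<Longrightarrow> 0 \<le> y \<Longrightarrow> 0 \<le> s \<Longrightarrow> 0 \<le> t \<Longrightarrow>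
     ((x \<le> s \<and> y < t) \<or> (x < s \<and> y \<le> t)) \<Longrightarrow> \<theta> x y < \<theta> s t"
    using assms(1) unfolding B_action_def by blast
  define s0 where "s0 = k/2"
  have s0: "s0 > 0" using k s0_def by simp
  have th0: "\<theta> s0 0 \<le> s0" using assms(1) s0 unfolding B_action_def by blast
  have cont: "continuous_on {0..} (\<lambda>t. \<theta> s0 t)" using assms(1) s0 unfolding B_action_def by auto
  then obtain dl where dl: "dl > 0" "\<forall>t\<in>{0..}. dist t 0 < dl \<longrightarrow> dist (\<theta> s0 t) (\<theta> s0 0) < k/2"
    unfolding continuous_on_iff using k by (metis atLeast_iff half_gt_zero order_refl)
  define t0 where "t0 = dl/2"
  have t0a: "t0 > 0" using dl t0_def by simp
  have "dist (\<theta> s0 t0) (\<theta> s0 0) < k/2" using dl(2) t0a unfolding t0_def by (auto simp: dist_real_def)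
  then have t0: "t0 > 0" "\<theta> s0 t0 < k"
    using t0a th0 s0_def by (auto simp: dist_real_def)
  define r where "r = min s0 t0"
  have rpos: "r > 0" using s0 t0 r_def by simp
  have rle: "\<theta> r r \<le> \<theta> s0 t0"
  proof (cases "r = s0 \<and> r = t0")
    case True then show ?thesis by auto
  next
    case False
    then have "\<theta> r r < \<theta> s0 t0" using mono[of r r s0 t0] rpos r_def by (auto simp: min_def split: if_splits)
    then show ?thesis by simp
  qed
  show "\<exists>r>0. \<forall>b\<in>X. d a b \<ge> k \<longrightarrow> (\<forall>c\<in>X. d a c + d c b \<ge> r)"
  proof (intro exI[of _ r] conjI ballI impI allI rpos)
    fix b c assume bX: "b \<in> X" and kb: "k \<le> d a b" and cX: "c \<in> X"
    have nn: "d a c \<ge> 0" "d c b \<ge> 0" using assms(2) aX bX cX unfolding theta_metric_def by auto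
    have tri: "d a b \<le> \<theta> (d a c) (d c b)" using assms(2) aX bX cX unfolding theta_metric_def by blast
    show "r \<le> d a c + d c b"
    proof (rule ccontr)
      assume "\<not> r \<le> d a c + d c b"
      then have "d a c < r" "d c b < r" using nn by auto
      then have "\<theta> (d a c) (d c b) < \<theta> r r" using mono nn rpos by auto
      then show False using rle t0 tri kb by linarith
    qed
  qed
qed

end
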